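(* Let $p$ be a prime, $m=p^2$, and $n,k$ positive integers with $(m,k-1)=1$ and $n=\mathrm{ind}_m(k)$; let $G=G(p^2,n,k)=\langle a,b;\ a^{p^2}=1,\ b^n=1,\ b^{-1}ab=a^k\rangle$. Then the right commutation semigroup $\mathrm{P}(G)$ and the left commutation semigroup $\Lambda(G)$ are complete, i.e. $\Sigma_G(R)$ and $\Sigma_G(L)$ are complete, where $R=\{k^j-1 \bmod m: j\in\mathbb{Z}_n\}$ and $L=\{1-k^j \bmod m: j\in\mathbb{Z}_n\}$.
   Context: $\mathrm{ind}_m(k)$ is the least positive integer $d$ with $k^d\equiv 1\pmod m$. Elements of $G$ are written uniquely as $a^ib^j$, $i\in\mathbb{Z}_m$, $j\in\mathbb{Z}_n$; $k_t=k^t-1\pmod m$. Commutators are $[x,y]=x^{-1}y^{-1}xy$; for $g\in G$, $\rho(g),\lambda(g):G\to G$ are $(x)\rho(g)=[x,g]$ and $(x)\lambda(g)=[g,x]$; maps are written on the right and composed left to right. $\mathrm{P}(G)$ and $\Lambda(G)$ are the semigroups under composition generated by $\{\rho(g)\}$ and $\{\lambda(g)\}$; they equal $\Sigma_G(R)$ and $\Sigma_G(L)$ respectively. For $x,y\in\mathbb{Z}_m$, $\mu(x,y):G\to G$ is $(a^ib^j)\mu(x,y)=a^{xik^j-yk_j}$, and $C(x,y)=\{\mu(x,yz):z\in\mathbb{Z}_m\}$. For $S\subseteq\mathbb{Z}_m$, $I(S)$ is the set of elements of $S$ invertible in $\mathbb{Z}_m$, and $S^*$ is the multiplicative subsemigroup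 generated by $S$. A base is $S\subseteq\mathbb{Z}_m$ with $0\in S$, $I(S)\ne\varnothing$. $\Sigma_G(S)$ is the semigroup generated by $\{\mu(s,z):s\in S,z\in\mathbb{Z}_m\}$. For $x\in S^*$, $Y(x)=\{s^*z: s^*\in S^*, z\in\mathbb{Z}_m, \exists s\in S,\ x\equiv ss^*\pmod m\}$; the $x$-family $\{C(x,y):y\in Y(x)\}$ is complete if it contains $C(x,1)$, and $\Sigma_G(S)$ is complete if every $x$-family ($x\in S^*$) is complete. *)

theory Defs
  imports "HOL-Number_Theory.Number_Theory"
begin

definition ind :: "int \<Rightarrow> int \<Rightarrow> nat" where
  "ind m k = (LEAST d::nat. 0 < d \<and> [k ^ d = 1] (mod m))"

(* mu(x,y) : G -> G, where the element a^i b^j of G (i in Z_m, j in Z_n) is encoded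
   as the pair (i,j) with 0 <= i < m, j < n, and the image a^e is encoded by e in Z_m
   (represented in {0..<m}). Outside the carrier the map is fixed to 0 so that
   equality of maps is equality on G. *)
definition mu :: "int \<Rightarrow> nat \<Rightarrow> int \<Rightarrow> int \<Rightarrow> int \<Rightarrow> (int \<times> nat \<Rightarrow> int)" where
  "mu m n k x y = (\<lambda>(i, j). if 0 \<le> i \<and> i < m \<and> j < n
       then (x * i * k ^ j - y * (k ^ j - 1)) mod m else 0)"

definition Cfam :: "int \<Rightarrow> nat \<Rightarrow> int \<Rightarrow> int \<Rightarrow> int \<Rightarrow> (int \<times> nat \<Rightarrow> int) set" where
  "Cfam m n k x y = {mu m n k x ((y * z) mod m) | z. 0 \<le> z \<and> z < m}"

inductive_set star_sg :: "int \<Rightarrow> int set \<Rightarrow> int set" for m S where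
  gen: "s \<in> S \<Longrightarrow> s \<in> star_sg m S"
| mult: "a \<in> star_sg m S \<Longrightarrow> b \<in> star_sg m S \<Longrightarrow> (a * b) mod m \<in> star_sg m S"

definition Yset :: "int \<Rightarrow> int set \<Rightarrow> int \<Rightarrow> int set" where
  "Yset m S x = {(t * z) mod m | t z. t \<in> star_sg m S \<and> 0 \<le> z \<and> z < m \<and>
                  (\<exists>s\<in>S. [x = s * t] (mod m))}"

definition family_complete :: "int \<Rightarrow> nat \<Rightarrow> int \<Rightarrow> int set \<Rightarrow> int \<Rightarrow> bool" where
  "family_complete m n k S x \<longleftrightarrow> (\<exists>y\<in>Yset m S x. Cfam m n k x y = Cfam m n k x 1)"

definition Sigma_complete :: "int \<Rightarrow> nat \<Rightarrow> int \<Rightarrow> int set \<Rightarrow> bool" where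
  "Sigma_complete m n k S \<longleftrightarrow> (\<forall>x\<in>star_sg m S. family_complete m n k S x)"

end

theory Submission
  imports Defs
begin

lemma one_in_star:
  fixes m u :: int
  assumes m1: "1 < m" and uS: "u \<in> S" and cu: "coprime u m" and Sr: "S \<subseteq> {0..<m}"
  shows "1 \<in> star_sg m S"
proof -
  have pw: "u ^ Suc j mod m \<in> star_sg m S" for j
  proof (induction j)
    case 0
    have "u mod m = u" using Sr uS by auto
    then show ?case using uS star_sg.gen[of u S m] by simp
  next
    case (Suc j)
    have "((u ^ Suc j mod m) * u) mod m \<in> star_sg m S"
      using star_sg.mult[OF Suc star_sg.gen[OF uS]] .
    moreover have "((u ^ Suc j mod m) * u) mod m = u ^ Suc (Suc j) mod m"
      by (metis mod_mult_left_eq power_Suc2)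
    ultimately show ?case by simp
  qed
  have e: "[u ^ totient (nat m) = 1] (mod m)"
    using residues.euler_theorem[of m u] m1 cu by (simp add: residues_def)
  have "totient (nat m) > 0" using m1 by simp
  then obtain j where "totient (nat m) = Suc j" using gr0_implies_Suc by blast
  with e pw[of j] show ?thesis using m1 by (simp add: cong_def)
qed

lemma decomp:
  fixes m p :: int
  assumes p: "prime p" and m: "m = p^2" and S0: "0 \<in> S" and one: "1 \<in> star_sg m S"
    and x: "x \<in> star_sg m S"
  shows "\<exists>s\<in>S. \<exists>t\<in>star_sg m S. coprime t m \<and> [x = s * t] (mod m)"
  using x
proof (induction rule: star_sg.induct)
  case (gen s)
  then show ?case using one by (intro bexI[of _ s] bexI[of _ 1]) auto
next
  case (mult a b)
  from mult.IH obtain s1 t1 where s1: "s1 \<in> S" "t1 \<in> star_sg m S" "coprime t1 m" "[a = s1 * t1] (mod m)" by blast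
  from mult.IH obtain s2 t2 where s2: "s2 \<in> S" "t2 \<in> star_sg m S" "coprime t2 m" "[b = s2 * t2] (mod m)" by blast
  have abc: "[a * b mod m = a * b] (mod m)" by (simp add: cong_def)
  have cpr: "coprime s m" if "\<not> p dvd s" for s
    using that p m by (simp add: prime_imp_coprime coprime_commute)
  show ?case
  proof (cases "p dvd s2")
    case False
    define t where "t = ((t1 * s2) mod m * t2) mod m"
    have tS: "t \<in> star_sg m S" unfolding t_def
      by (intro star_sg.mult s1 s2 star_sg.gen)
    have ct: "coprime t m" unfolding t_def using s1 s2 cpr[OF False]
      by (metis coprime_commute coprime_mod_left_iff coprime_mult_left_iff mod_0 mod_by_0 one m mod_mult_right_eq)
    have "[a * b = s1 * t1 * (s2 * t2)] (mod m)" using s1(4) s2(4) by (intro cong_mult)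
    moreover have "[s1 * t1 * (s2 * t2) = s1 * t] (mod m)" unfolding t_def
      by (simp add: cong_def mod_mult_right_eq mod_mult_left_eq mult.assoc mult.left_commute)
    ultimately show ?thesis using abc tS ct s1(1) by (meson cong_trans)
  next
    case True
    show ?thesis
    proof (cases "p dvd s1")
      case False
      define t where "t = ((t2 * s1) mod m * t1) mod m"
      have tS: "t \<in> star_sg m S" unfolding t_def
        by (intro star_sg.mult s1 s2 star_sg.gen)
      have ct: "coprime t m" unfolding t_def using s1 s2 cpr[OF False]
        by (metis coprime_commute coprime_mod_left_iff coprime_mult_left_iff mod_0 mod_by_0 one m mod_mult_right_eq)
      have "[a * b = s2 * t2 * (s1 * t1)] (mod m)" using s1(4) s2(4)
        by (metis cong_mult mult.commute)
      moreover have "[s2 * t2 * (s1 * t1) = s2 * t] (mod m)" unfolding t_def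
        by (simp add: cong_def mod_mult_right_eq mod_mult_left_eq mult.assoc mult.left_commute)
      ultimately show ?thesis using abc tS ct s2(1) by (meson cong_trans)
    next
      case True2: True
      have "p dvd a" using s1(4) True2 m
        by (metis cong_dvd_iff cong_dvd_modulus dvd_mult2 dvd_triv_left power2_eq_square)
      moreover have "p dvd b" using s2(4) True m
        by (metis cong_dvd_iff cong_dvd_modulus dvd_mult2 dvd_triv_left power2_eq_square)
      ultimately have "m dvd a * b" using m by (simp add: mult_dvd_mono power2_eq_square)
      then have "[a * b mod m = 0 * 1] (mod m)" by (simp add: cong_def)
      then show ?thesis using S0 one by (intro bexI[of _ 0] bexI[of _ 1]) auto
    qed
  qed
qed

lemma complete_gen:
  fixes m p :: int
  assumes p: "prime p" and m: "m = p^2" and S0: "0 \<in> S" and uS: "u \<in> S" and cu: "coprime u m"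
    and Sr: "S \<subseteq> {0..<m}"
  shows "Sigma_complete m n k S"
  unfolding Sigma_complete_def family_complete_def
proof
  fix x assume x: "x \<in> star_sg m S"
  have m1: "1 < m" using p m prime_gt_1_int
    by (metis less_le_trans one_less_power pos2 power_increasing_iff self_le_power zero_less_two)
  have one: "1 \<in> star_sg m S" using one_in_star[OF m1 uS cu Sr] .
  obtain s t where st: "s \<in> S" "t \<in> star_sg m S" "coprime t m" "[x = s * t] (mod m)"
    using decomp[OF p m S0 one x] by blast
  obtain z where z: "[t * z = 1] (mod m)" using cong_solve_coprime_int[OF st(3)] by blast
  have "t * (z mod m) mod m = 1" using z m1
    by (simp add: cong_def mod_mult_right_eq)
  moreover have "0 \<le> z mod m" "z mod m < m" using m1 by auto
  ultimately have "1 \<in> Yset m S x" unfolding Yset_def using st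
    apply (simp only: mem_Collect_eq)
    apply (rule exI[of _ t], rule exI[of _ "z mod m"])
    apply (intro conjI; (assumption | simp)?)
    apply blast
    done
  then show "\<exists>y\<in>Yset m S x. Cfam m n k x y = Cfam m n k x 1" by blast
qed

lemma n1_case:
  fixes m :: int
  assumes m1: "1 < m"
  shows "Sigma_complete m 1 k {0}"
  unfolding Sigma_complete_def family_complete_def
proof
  fix x assume x: "x \<in> star_sg m {0}"
  have sub: "y \<in> star_sg m {0} \<Longrightarrow> y = 0" for y
    by (induction rule: star_sg.induct) auto
  have x0: "x = 0" using sub[OF x] .
  have z0: "0 \<in> star_sg m {0}" by (rule star_sg.gen) simp
  have "0 \<in> Yset m {0} x" unfolding Yset_def using x0 z0 m1
    apply (simp only: mem_Collect_eq)
    apply (rule exI[of _ 0], rule exI[of _ 0])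
    apply simp
    done
  moreover have mueq: "mu m 1 k x y = mu m 1 k x 0" for y
    unfolding mu_def by (rule ext) auto
  have "Cfam m 1 k x y = {mu m 1 k x 0}" for y
    unfolding Cfam_def using mueq m1 by (auto intro!: exI[of _ 0])
  ultimately show "\<exists>y\<in>Yset m {0} x. Cfam m 1 k x y = Cfam m 1 k x 1" by auto
qed

theorem theorem6p3:
  fixes p k :: int and n :: nat
  assumes "prime p" and "0 < k" and "0 < n"
    and "coprime (p^2) (k - 1)"
    and "n = ind (p^2) k"
  shows "Sigma_complete (p^2) n k {(k ^ j - 1) mod (p^2) | j. j < n}
       \<and> Sigma_complete (p^2) n k {(1 - k ^ j) mod (p^2) | j. j < n}"
proof -
  define m where "m = p^2"
  have m1: "1 < m" unfolding m_def using assms(1) prime_gt_1_int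
    by (metis less_le_trans one_less_power pos2 power_increasing_iff self_le_power zero_less_two)
  show ?thesis
  proof (cases "n = 1")
    case True
    have "{(k ^ j - 1) mod (p^2) | j. j < n} = {0}" "{(1 - k ^ j) mod (p^2) | j. j < n} = {0}"
      using True by auto
    then show ?thesis using True n1_case[OF m1] unfolding m_def by simp
  next
    case False
    then have n2: "1 < n" using assms(3) by simp
    have c1: "coprime ((k - 1) mod m) m" using assms(4) m1 unfolding m_def
      by (metis coprime_commute coprime_mod_left_iff not_one_less_zero)
    have c2: "coprime ((1 - k) mod m) m" using assms(4) m1 unfolding m_def
      by (metis coprime_commute coprime_minus_left_iff coprime_mod_left_iff minus_diff_eq not_one_less_zero)
    have A: "Sigma_complete m n k {(k ^ j - 1) mod m | j. j < n}"
      apply (rule complete_gen[OF assms(1) m_def, of _ "(k - 1) mod m"])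
      using n2 assms(3) c1 m1 apply auto
      apply (rule exI[of _ 0]; simp)
      apply (rule exI[of _ 1]; simp)
      done
    have B: "Sigma_complete m n k {(1 - k ^ j) mod m | j. j < n}"
      apply (rule complete_gen[OF assms(1) m_def, of _ "(1 - k) mod m"])
      using n2 assms(3) c2 m1 apply auto
      apply (rule exI[of _ 0]; simp)
      apply (rule exI[of _ 1]; simp)
      done
    show ?thesis using A B unfolding m_def by simp
  qed
qed

end
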